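(* For $k\ge2$, positive integers $a_1,\ldots,a_k$ and $j\ge1$, \[\bigl|Q_j^{a_1,\ldots,a_k}\bigr|=\sum_{\substack{(l_2,\ldots,l_k):\ l_c\in[0,a_c]\\ l_2+\cdots+l_k=j-a_1}}\ \prod_{c=2}^k\binom{a_c}{l_c}\,P\!\Bigl(a_1+\sum_{i=2}^{c-1}l_i,\ a_c-l_c\Bigr),\] where $P(m,l)=\binom{m}{l}\,l!$ (which is $0$ if $l>m$).
   Context: For positive integers $a_1,\ldots,a_k$ with $N=\sum a_m$, let $A_i=a_1+\cdots+a_i$ ($A_0=0$) and $I_i=\{A_{i-1}+1,\ldots,A_i\}$. $Q_j^{a_1,\ldots,a_k}$ is the set of all partitions of $[N]$ into exactly $j$ nonempty blocks such that no block contains two distinct elements of the same segment $I_i$. *)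

theory Defs
  imports Main "HOL-Library.Disjoint_Sets"
begin

definition segA :: "(nat \<Rightarrow> nat) \<Rightarrow> nat \<Rightarrow> nat" where
  "segA a i = (\<Sum>m=1..i. a m)"

definition segI :: "(nat \<Rightarrow> nat) \<Rightarrow> nat \<Rightarrow> nat set" where
  "segI a i = {segA a (i - 1) + 1 .. segA a i}"

definition Qset :: "nat \<Rightarrow> (nat \<Rightarrow> nat) \<Rightarrow> nat \<Rightarrow> nat set set set" where
  "Qset k a j = {p. partition_on {1..segA a k} p \<and> card p = j \<and>
     (\<forall>B\<in>p. \<forall>i\<in>{1..k}. \<forall>x\<in>B. \<forall>y\<in>B. x \<in> segI a i \<and> y \<in> segI a i \<longrightarrow> x = y)}"

definition Pfall :: "nat \<Rightarrow> nat \<Rightarrow> nat" where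
  "Pfall m l = (m choose l) * fact l"

end

theory Submission imports Defs "HOL-Library.FuncSet" begin
lemma blk_eq: assumes "partition_on A p" "B \<in> p" "x \<in> B" shows "(THE B. B \<in> p \<and> x \<in> B) = B"
  by (rule the_equality) (use assms in \<open>auto simp: partition_on_def disjoint_def\<close>)

lemma blk_mem: assumes "partition_on A p" "x \<in> A"
  shows "(THE B. B \<in> p \<and> x \<in> B) \<in> p \<and> x \<in> (THE B. B \<in> p \<and> x \<in> B)"
proof -
  from assms obtain B where "B \<in> p" "x \<in> B" by (auto simp: partition_on_def)
  then show ?thesis using blk_eq[OF assms(1)] by simp
qed

lemma part_disj: "partition_on A p \<Longrightarrow> B1 \<in> p \<Longrightarrow> B2 \<in> p \<Longrightarrow> x \<in> B1 \<Longrightarrow> x \<in> B2 \<Longrightarrow> B1 = B2"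
  by (auto simp: partition_on_def disjoint_def)

lemma Pfall_prod: "Pfall m l = (\<Prod>i\<in>{0..<l}. m - i)"
proof (induction l)
  case 0 then show ?case by (simp add: Pfall_def)
next
  case (Suc l)
  have e: "Suc l * (m choose Suc l) = (m - l) * (m choose l)"
    using binomial_absorb_comp[of m l] binomial_absorption[of l m] by simp
  have "(m choose Suc l) * fact (Suc l) = (Suc l * (m choose Suc l)) * fact l"
    by (simp add: fact_Suc algebra_simps)
  also have "\<dots> = (m choose l) * fact l * (m - l)" unfolding e by (simp add: algebra_simps)
  finally have "(m choose Suc l) * fact (Suc l) = (m choose l) * fact l * (m - l)" .
  then show ?case using Suc by (simp add: Pfall_def)
qed

lemma count_ext:
  fixes U S :: "'a set" and good :: "'a set \<Rightarrow> bool" and j :: nat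
  assumes fU: "finite U" and fS: "finite S" and dis: "U \<inter> S = {}" and g0: "good {}"
  shows "card {p. partition_on (U \<union> S) p \<and> card p = j \<and> (\<forall>B\<in>p. good (U \<inter> B)) \<and> (\<forall>B\<in>p. \<forall>x\<in>B\<inter>S. \<forall>y\<in>B\<inter>S. x = y)}
       = (\<Sum>q\<in>{q. partition_on U q \<and> card q \<le> j \<and> (\<forall>C\<in>q. good C)}. (card S choose (j - card q)) * Pfall (card q) (card S - (j - card q)))"
proof -
  define W' :: "'a set set set" where "W' = {p. partition_on (U \<union> S) p \<and> card p = j \<and> (\<forall>B\<in>p. good (U \<inter> B)) \<and> (\<forall>B\<in>p. \<forall>x\<in>B\<inter>S. \<forall>y\<in>B\<inter>S. x = y)}"
  define Q :: "'a set set set" where "Q = {q. partition_on U q \<and> card q \<le> j \<and> (\<forall>C\<in>q. good C)}"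
  define FF :: "'a set set \<Rightarrow> 'a set \<Rightarrow> ('a \<Rightarrow> 'a set) set" where "FF = (\<lambda>q T. {f. f \<in> (S - T) \<rightarrow>\<^sub>E q \<and> inj_on f (S - T)})"
  define TT :: "'a set set \<Rightarrow> 'a set set" where "TT = (\<lambda>q. {T. T \<subseteq> S \<and> card T = j - card q})"
  define D where "D = (SIGMA q:Q. SIGMA T:TT q. FF q T)"
  define \<psi> :: "'a set set \<times> 'a set \<times> ('a \<Rightarrow> 'a set) \<Rightarrow> 'a set set"
    where "\<psi> = (\<lambda>(q,T,f). (\<lambda>C. C \<union> {x\<in>S-T. f x = C}) ` q \<union> (\<lambda>x. {x}) ` T)"
  define blk :: "'a set set \<Rightarrow> 'a \<Rightarrow> 'a set" where "blk = (\<lambda>p x. THE B::'a set. B \<in> p \<and> x \<in> B)"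
  define \<phi> where "\<phi> = (\<lambda>p. ((\<inter>) U ` p - {{}}, {x\<in>S. U \<inter> blk p x = {}},
       restrict (\<lambda>x. U \<inter> blk p x) (S - {x\<in>S. U \<inter> blk p x = {}})))"
  have AC: "\<psi> d \<in> W' \<and> \<phi> (\<psi> d) = d" if dD: "d \<in> D" for d
  proof -
    obtain q T f where d: "d = (q,T,f)" by (cases d) auto
    from dD have q: "partition_on U q" "card q \<le> j" "\<forall>C\<in>q. good C"
      and T: "T \<subseteq> S" "card T = j - card q" and f: "f \<in> (S - T) \<rightarrow>\<^sub>E q" "inj_on f (S - T)"
      unfolding d D_def Q_def TT_def FF_def by auto
    define E where "E = (\<lambda>C. {x\<in>S-T. f x = C})"
    define P1 where "P1 = (\<lambda>C. C \<union> E C) ` q"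
    define P2 where "P2 = (\<lambda>x. {x}) ` T"
    have p: "\<psi> d = P1 \<union> P2" unfolding \<psi>_def d P1_def P2_def E_def by simp
    have qU: "C \<subseteq> U" "C \<noteq> {}" if "C \<in> q" for C using q(1) that by (auto simp: partition_on_def)
    have qd: "C1 \<inter> C2 = {}" if "C1 \<in> q" "C2 \<in> q" "C1 \<noteq> C2" for C1 C2
      using q(1) that by (auto simp: partition_on_def disjoint_def)
    have ES: "E C \<subseteq> S - T" for C unfolding E_def by auto
    have fq: "f x \<in> q" if "x \<in> S - T" for x using f(1) that by auto
    have UE: "U \<inter> (C \<union> E C) = C" if "C \<in> q" for C using qU[OF that] ES[of C] dis by blast
    have fq2: "finite q" using q(1) fU finite_elements by blast
    have fT: "finite T" using T(1) fS finite_subset by blast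
    have un: "\<Union>(P1 \<union> P2) = U \<union> S"
    proof
      show "\<Union>(P1 \<union> P2) \<subseteq> U \<union> S" unfolding P1_def P2_def using qU ES T(1) by blast
      show "U \<union> S \<subseteq> \<Union>(P1 \<union> P2)"
      proof
        fix x assume x: "x \<in> U \<union> S"
        show "x \<in> \<Union>(P1 \<union> P2)"
        proof (cases "x \<in> U")
          case True
          then obtain C where "C \<in> q" "x \<in> C" using q(1) by (auto simp: partition_on_def)
          then show ?thesis unfolding P1_def by blast
        next
          case False
          then have "x \<in> S" using x by blast
          show ?thesis
          proof (cases "x \<in> T")
            case True then show ?thesis unfolding P2_def by blast
          next
            case False
            with \<open>x \<in> S\<close> have "x \<in> E (f x)" "f x \<in> q" using fq unfolding E_def by auto
            then show ?thesis unfolding P1_def by blast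
          qed
        qed
      qed
    qed
    have part: "partition_on (U \<union> S) (P1 \<union> P2)"
    proof (rule partition_onI[OF un])
      fix p1 p2 assume p12: "p1 \<in> P1 \<union> P2" "p2 \<in> P1 \<union> P2" "p1 \<noteq> p2"
      show "disjnt p1 p2"
      proof (cases "p1 \<in> P1")
        case True
        then obtain C1 where C1: "C1 \<in> q" "p1 = C1 \<union> E C1" unfolding P1_def by blast
        show ?thesis
        proof (cases "p2 \<in> P1")
          case True
          then obtain C2 where C2: "C2 \<in> q" "p2 = C2 \<union> E C2" unfolding P1_def by blast
          with C1 p12 have "C1 \<noteq> C2" by auto
          then have "C1 \<inter> C2 = {}" "E C1 \<inter> E C2 = {}" using qd C1 C2 unfolding E_def by auto
          then show ?thesis using C1 C2 ES[of C1] ES[of C2] qU[OF C1(1)] qU[OF C2(1)] dis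
            unfolding disjnt_def by blast
        next
          case False
          then obtain x where "x \<in> T" "p2 = {x}" using p12 unfolding P2_def by blast
          then show ?thesis using C1 ES[of C1] qU[OF C1(1)] dis T(1) unfolding disjnt_def by blast
        qed
      next
        case False
        then obtain x where x: "x \<in> T" "p1 = {x}" using p12 unfolding P2_def by blast
        show ?thesis
        proof (cases "p2 \<in> P1")
          case True
          then obtain C2 where C2: "C2 \<in> q" "p2 = C2 \<union> E C2" unfolding P1_def by blast
          then show ?thesis using x ES[of C2] qU[OF C2(1)] dis T(1) unfolding disjnt_def by blast
        next
          case False
          then obtain y where "y \<in> T" "p2 = {y}" using p12 unfolding P2_def by blast
          then show ?thesis using x p12 unfolding disjnt_def by blast
        qed
      qed
    next
      show "{} \<notin> P1 \<union> P2" unfolding P1_def P2_def using qU by blast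
    qed
    have inj1: "inj_on (\<lambda>C. C \<union> E C) q" by (rule inj_onI) (metis UE)
    have c1: "card P1 = card q" unfolding P1_def using card_image[OF inj1] .
    have c2: "card P2 = card T" unfolding P2_def by (rule card_image) (auto simp: inj_on_def)
    have P12: "P1 \<inter> P2 = {}"
    proof -
      have "U \<inter> B \<noteq> {}" if "B \<in> P1" for B using that UE qU unfolding P1_def by auto
      moreover have "U \<inter> B = {}" if "B \<in> P2" for B using that dis T(1) unfolding P2_def by auto
      ultimately show ?thesis by blast
    qed
    have cj: "card (P1 \<union> P2) = j"
      using card_Un_disjoint[OF _ _ P12] c1 c2 T(2) q(2) fq2 fT unfolding P1_def P2_def by auto
    have ux: "U \<inter> {x} = {}" if "x \<in> T" for x using that dis T(1) by auto
    have good: "\<forall>B\<in>P1 \<union> P2. good (U \<inter> B)"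
      using UE q(3) g0 ux unfolding P1_def P2_def by auto
    have scond: "\<forall>B\<in>P1 \<union> P2. \<forall>x\<in>B\<inter>S. \<forall>y\<in>B\<inter>S. x = y"
    proof (intro ballI)
      fix B x y assume B: "B \<in> P1 \<union> P2" and xy: "x \<in> B \<inter> S" "y \<in> B \<inter> S"
      show "x = y"
      proof (cases "B \<in> P1")
        case True
        then obtain C where C: "C \<in> q" "B = C \<union> E C" unfolding P1_def by blast
        then have "x \<in> E C" "y \<in> E C" using xy qU[OF C(1)] dis by auto
        then show ?thesis using f(2) unfolding E_def inj_on_def by auto
      next
        case False then show ?thesis using B xy unfolding P2_def by auto
      qed
    qed
    have W: "\<psi> d \<in> W'" unfolding W'_def p using part cj good scond by blast
    have blk1: "blk (\<psi> d) x = f x \<union> E (f x)" if "x \<in> S - T" for x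
      unfolding blk_def p
      by (rule blk_eq[OF part]) (use that fq in \<open>auto simp: P1_def E_def\<close>)
    have blk2: "blk (\<psi> d) x = {x}" if "x \<in> T" for x
      unfolding blk_def p
      by (rule blk_eq[OF part]) (use that in \<open>auto simp: P2_def\<close>)
    have e1: "(\<inter>) U ` (\<psi> d) - {{}} = q"
    proof -
      have "(\<inter>) U ` P1 = q" unfolding P1_def image_image using UE by (simp cong: image_cong)
      moreover have "(\<inter>) U ` P2 \<subseteq> {{}}" unfolding P2_def using dis T(1) by auto
      moreover have "{} \<notin> q" using qU by blast
      ultimately show ?thesis unfolding p by blast
    qed
    have e2: "{x\<in>S. U \<inter> blk (\<psi> d) x = {}} = T"
    proof -
      have "U \<inter> blk (\<psi> d) x \<noteq> {}" if "x \<in> S - T" for x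
        using blk1[OF that] UE[OF fq[OF that]] qU[OF fq[OF that]] by simp
      moreover have "U \<inter> blk (\<psi> d) x = {}" if "x \<in> T" for x
        using blk2[OF that] dis T(1) that by auto
      ultimately show ?thesis using T(1) by blast
    qed
    have e3: "restrict (\<lambda>x. U \<inter> blk (\<psi> d) x) (S - T) = f"
    proof
      fix x show "restrict (\<lambda>x. U \<inter> blk (\<psi> d) x) (S - T) x = f x"
      proof (cases "x \<in> S - T")
        case True then show ?thesis using blk1[OF True] UE[OF fq[OF True]] by simp
      next
        case False then show ?thesis using f(1) by (auto simp: PiE_def extensional_def)
      qed
    qed
    have "\<phi> (\<psi> d) = (q,T,f)" unfolding \<phi>_def e2 e1 e3 by simp
    then have "\<phi> (\<psi> d) = d" using d by simp
    with W show ?thesis by blast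
  qed
  have BD: "\<phi> p \<in> D \<and> \<psi> (\<phi> p) = p" if pW: "p \<in> W'" for p
  proof -
    from pW have p: "partition_on (U \<union> S) p" "card p = j" "\<forall>B\<in>p. good (U \<inter> B)"
      "\<forall>B\<in>p. \<forall>x\<in>B\<inter>S. \<forall>y\<in>B\<inter>S. x = y" unfolding W'_def by auto
    define q where "q = (\<inter>) U ` p - {{}}"
    define T where "T = {x\<in>S. U \<inter> blk p x = {}}"
    define f where "f = restrict (\<lambda>x. U \<inter> blk p x) (S - T)"
    have phi: "\<phi> p = (q, T, f)" unfolding \<phi>_def q_def T_def f_def by simp
    have bm: "blk p x \<in> p" "x \<in> blk p x" if "x \<in> U \<union> S" for x
      using blk_mem[OF p(1) that] unfolding blk_def by auto
    have be: "blk p x = B" if "B \<in> p" "x \<in> B" for x B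
      using blk_eq[OF p(1) that] unfolding blk_def by auto
    have pd: "B1 = B2" if "B1 \<in> p" "B2 \<in> p" "x \<in> B1" "x \<in> B2" for B1 B2 x
      using part_disj[OF p(1) that] .
    have pU: "B \<subseteq> U \<union> S" "B \<noteq> {}" if "B \<in> p" for B using p(1) that by (auto simp: partition_on_def)
    have fp: "finite p" using p(1) fU fS finite_elements by blast
    have qpart: "partition_on U q"
      using partition_on_restrict[OF p(1), of U] unfolding q_def by (simp add: Int_absorb2)
    have qgood: "\<forall>C\<in>q. good C" using p(3) unfolding q_def by auto
    define P1 where "P1 = {B\<in>p. U \<inter> B \<noteq> {}}"
    define P2 where "P2 = {B\<in>p. U \<inter> B = {}}"
    have P2T: "P2 = (\<lambda>x. {x}) ` T"
    proof
      show "P2 \<subseteq> (\<lambda>x. {x}) ` T"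
      proof
        fix B assume B: "B \<in> P2"
        then have B': "B \<in> p" "U \<inter> B = {}" unfolding P2_def by auto
        then obtain x where x: "x \<in> B" using pU by blast
        have BS: "B \<subseteq> S" using pU[OF B'(1)] B'(2) by blast
        have "B = {x}" using p(4) B'(1) x BS by blast
        moreover have "x \<in> T" unfolding T_def using be[OF B'(1) x] B'(2) x BS by auto
        ultimately show "B \<in> (\<lambda>x. {x}) ` T" by blast
      qed
      show "(\<lambda>x. {x}) ` T \<subseteq> P2"
      proof
        fix B assume "B \<in> (\<lambda>x. {x}) ` T"
        then obtain x where x: "x \<in> T" "B = {x}" by blast
        then have xS: "x \<in> S" "U \<inter> blk p x = {}" unfolding T_def by auto
        have m: "blk p x \<in> p" "x \<in> blk p x" using bm xS by auto
        have "blk p x \<subseteq> S" using pU[OF m(1)] xS by blast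
        then have "blk p x = {x}" using p(4) m by blast
        then show "B \<in> P2" using m xS x unfolding P2_def by auto
      qed
    qed
    have inj1: "inj_on ((\<inter>) U) P1"
    proof (rule inj_onI)
      fix B1 B2 assume "B1 \<in> P1" "B2 \<in> P1" "U \<inter> B1 = U \<inter> B2"
      then show "B1 = B2" using pd unfolding P1_def by blast
    qed
    have qP1: "q = (\<inter>) U ` P1" unfolding q_def P1_def by auto
    have cq: "card q = card P1" unfolding qP1 using card_image[OF inj1] .
    have fT: "finite T" unfolding T_def using fS by simp
    have cT: "card P2 = card T" unfolding P2T by (rule card_image) (auto simp: inj_on_def)
    have pP: "p = P1 \<union> P2" unfolding P1_def P2_def by blast
    have fP1: "finite P1" "finite P2" using fp unfolding P1_def P2_def by auto
    have dP: "P1 \<inter> P2 = {}" unfolding P1_def P2_def by blast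
    have "card p = card P1 + card P2"
      using card_Un_disjoint[OF fP1 dP] pP by simp
    then have cpj: "card q + card T = j" using cq cT p(2) by simp
    have fS2: "f x \<in> q" and bS: "U \<inter> blk p x \<noteq> {}" if "x \<in> S - T" for x
    proof -
      have "blk p x \<in> p" using bm that by auto
      moreover show "U \<inter> blk p x \<noteq> {}" using that unfolding T_def by auto
      ultimately show "f x \<in> q" using that unfolding f_def q_def by auto
    qed
    have fPi: "f \<in> (S - T) \<rightarrow>\<^sub>E q" using fS2 unfolding f_def by auto
    have finj: "inj_on f (S - T)"
    proof (rule inj_onI)
      fix x y assume x: "x \<in> S - T" and y: "y \<in> S - T" and e: "f x = f y"
      then have e': "U \<inter> blk p x = U \<inter> blk p y" unfolding f_def by auto
      have "blk p x = blk p y" using pd bm[of x] bm[of y] x y e' bS[OF x] by blast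
      then show "x = y" using p(4) bm[of x] bm[of y] x y by auto
    qed
    have inD: "\<phi> p \<in> D" unfolding phi D_def Q_def TT_def FF_def
      using qpart qgood cpj fPi finj by (auto simp: T_def)
    have blkP1: "(U \<inter> B) \<union> {x\<in>S-T. f x = U \<inter> B} = B" if "B \<in> P1" for B
    proof -
      have B: "B \<in> p" "U \<inter> B \<noteq> {}" using that unfolding P1_def by auto
      have "{x\<in>S-T. f x = U \<inter> B} = B \<inter> S"
      proof (intro equalityI subsetI)
        fix x assume "x \<in> {x\<in>S-T. f x = U \<inter> B}"
        then have x: "x \<in> S" "x \<notin> T" "f x = U \<inter> B" by auto
        then have "U \<inter> blk p x = U \<inter> B" unfolding f_def by auto
        then have "blk p x = B" using pd bm[of x] x B by blast
        then show "x \<in> B \<inter> S" using bm[of x] x by auto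
      next
        fix x assume "x \<in> B \<inter> S"
        then have x: "x \<in> B" "x \<in> S" by auto
        have nT: "x \<notin> T" using be[OF B(1) x(1)] B unfolding T_def by auto
        have "f x = U \<inter> B" using be[OF B(1) x(1)] x nT unfolding f_def by auto
        then show "x \<in> {x\<in>S-T. f x = U \<inter> B}" using x nT by auto
      qed
      then show ?thesis using pU[OF B(1)] by blast
    qed
    have "\<psi> (\<phi> p) = (\<lambda>C. C \<union> {x\<in>S-T. f x = C}) ` ((\<inter>) U ` P1) \<union> P2"
      unfolding phi \<psi>_def qP1 P2T by simp
    also have "(\<lambda>C. C \<union> {x\<in>S-T. f x = C}) ` ((\<inter>) U ` P1) = P1"
      unfolding image_image using blkP1 by (simp cong: image_cong)
    also have "P1 \<union> P2 = p" unfolding P1_def P2_def by blast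
    finally show ?thesis using inD by blast
  qed
  have bij: "bij_betw \<psi> D W'"
    by (rule bij_betw_byWitness[where f'=\<phi>]) (use AC BD in blast)+
  have cW: "card W' = card D" using bij_betw_same_card[OF bij] by simp
  have fQ: "finite Q"
    by (rule finite_subset[of _ "Pow (Pow U)"]) (auto simp: Q_def partition_on_def fU)
  have fq: "finite q" if "q \<in> Q" for q using that fU finite_elements unfolding Q_def by blast
  have fTT: "finite (TT q)" for q
    by (rule finite_subset[of _ "Pow S"]) (auto simp: TT_def fS)
  have fFF: "finite (FF q T)" if "q \<in> Q" for q T
    by (rule finite_subset[of _ "(S - T) \<rightarrow>\<^sub>E q"]) (auto simp: FF_def intro!: finite_PiE fS fq[OF that])
  have "card D = (\<Sum>q\<in>Q. card (SIGMA T:TT q. FF q T))"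
    unfolding D_def by (rule card_SigmaI) (use fQ fTT fFF in \<open>auto intro: finite_SigmaI\<close>)
  also have "\<dots> = (\<Sum>q\<in>Q. \<Sum>T\<in>TT q. card (FF q T))"
    by (rule sum.cong) (auto intro!: card_SigmaI fTT fFF)
  also have "\<dots> = (\<Sum>q\<in>Q. (card S choose (j - card q)) * Pfall (card q) (card S - (j - card q)))"
  proof (rule sum.cong[OF refl])
    fix q assume q: "q \<in> Q"
    have "card (FF q T) = Pfall (card q) (card S - (j - card q))" if T: "T \<in> TT q" for T
    proof -
      have T': "T \<subseteq> S" "card T = j - card q" using T unfolding TT_def by auto
      have "card (FF q T) = card q ^ (card (S - T) - card (S - T)) * prod ((-) (card q)) {0..<card (S - T)}"
        unfolding FF_def using card_inj_on_subset_funcset[of "S - T" q "S - T"] fS fq[OF q] by simp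
      also have "card (S - T) = card S - (j - card q)"
        using card_Diff_subset[OF finite_subset[OF T'(1) fS] T'(1)] T'(2) by simp
      finally show ?thesis by (simp add: Pfall_prod)
    qed
    then have "(\<Sum>T\<in>TT q. card (FF q T)) = card (TT q) * Pfall (card q) (card S - (j - card q))"
      by simp
    also have "card (TT q) = card S choose (j - card q)" unfolding TT_def using n_subsets[OF fS] .
    finally show "(\<Sum>T\<in>TT q. card (FF q T)) = (card S choose (j - card q)) * Pfall (card q) (card S - (j - card q))" .
  qed
  finally have "card D = (\<Sum>q\<in>Q. (card S choose (j - card q)) * Pfall (card q) (card S - (j - card q)))" .
  with cW show ?thesis unfolding W'_def Q_def by simp
qed

lemma segA_Suc: "segA a (Suc k) = segA a k + a (Suc k)"
  unfolding segA_def by simp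

lemma segI_sub: assumes "i \<in> {1..k}" shows "segI a i \<subseteq> {1..segA a k}"
proof -
  have "segA a i \<le> segA a k" unfolding segA_def by (rule sum_mono2) (use assms in auto)
  then show ?thesis unfolding segI_def by auto
qed

lemma Qrec: "card (Qset (Suc k) a j) =
  (\<Sum>m=0..j. card (Qset k a m) * ((a (Suc k) choose (j - m)) * Pfall m (a (Suc k) - (j - m))))"
proof -
  define U where "U = {1..segA a k}"
  define S where "S = segI a (Suc k)"
  define good where "good = (\<lambda>C. \<forall>i\<in>{1..k}. \<forall>x\<in>C. \<forall>y\<in>C. x \<in> segI a i \<and> y \<in> segI a i \<longrightarrow> x = y)"
  have S: "S = {segA a k + 1 .. segA a k + a (Suc k)}" unfolding S_def segI_def segA_Suc by simp
  have cS: "card S = a (Suc k)" unfolding S by simp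
  have US: "U \<union> S = {1..segA a (Suc k)}" unfolding U_def S segA_Suc by auto
  have dis: "U \<inter> S = {}" unfolding U_def S by auto
  have sub: "segI a i \<subseteq> U" if "i \<in> {1..k}" for i using segI_sub[OF that] unfolding U_def .
  have cond: "(\<forall>i\<in>{1..Suc k}. \<forall>x\<in>B. \<forall>y\<in>B. x \<in> segI a i \<and> y \<in> segI a i \<longrightarrow> x = y) \<longleftrightarrow>
     good (U \<inter> B) \<and> (\<forall>x\<in>B\<inter>S. \<forall>y\<in>B\<inter>S. x = y)" for B
  proof -
    have iv: "{1..Suc k} = insert (Suc k) {1..k}" by auto
    have A: "(\<forall>i\<in>{1..k}. \<forall>x\<in>B. \<forall>y\<in>B. x \<in> segI a i \<and> y \<in> segI a i \<longrightarrow> x = y) \<longleftrightarrow> good (U \<inter> B)"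
    proof
      assume H: "\<forall>i\<in>{1..k}. \<forall>x\<in>B. \<forall>y\<in>B. x \<in> segI a i \<and> y \<in> segI a i \<longrightarrow> x = y"
      show "good (U \<inter> B)" unfolding good_def
      proof (intro ballI impI)
        fix i x y assume "i \<in> {1..k}" "x \<in> U \<inter> B" "y \<in> U \<inter> B" "x \<in> segI a i \<and> y \<in> segI a i"
        then show "x = y" using H by auto
      qed
    next
      assume G: "good (U \<inter> B)"
      show "\<forall>i\<in>{1..k}. \<forall>x\<in>B. \<forall>y\<in>B. x \<in> segI a i \<and> y \<in> segI a i \<longrightarrow> x = y"
      proof (intro ballI impI)
        fix i x y assume i: "i \<in> {1..k}" and xy: "x \<in> B" "y \<in> B" "x \<in> segI a i \<and> y \<in> segI a i"
        then have "x \<in> U \<inter> B" "y \<in> U \<inter> B" using sub[OF i] by auto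
        then show "x = y" using G i xy(3) unfolding good_def by auto
      qed
    qed
    have B: "(\<forall>x\<in>B. \<forall>y\<in>B. x \<in> segI a (Suc k) \<and> y \<in> segI a (Suc k) \<longrightarrow> x = y) \<longleftrightarrow> (\<forall>x\<in>B\<inter>S. \<forall>y\<in>B\<inter>S. x = y)"
      unfolding S_def by auto
    show ?thesis unfolding iv ball_simps(7) A B by (rule conj_commute)
  qed
  have QS: "Qset (Suc k) a j = {p. partition_on (U \<union> S) p \<and> card p = j \<and> (\<forall>B\<in>p. good (U \<inter> B)) \<and> (\<forall>B\<in>p. \<forall>x\<in>B\<inter>S. \<forall>y\<in>B\<inter>S. x = y)}"
    unfolding Qset_def US cond ball_conj_distrib by simp
  have fQ: "finite {q. partition_on U q \<and> card q \<le> j \<and> (\<forall>C\<in>q. good C)}"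
    by (rule finite_subset[of _ "Pow (Pow U)"]) (auto simp: partition_on_def U_def)
  have g0: "good {}" unfolding good_def by simp
  have "card (Qset (Suc k) a j) = (\<Sum>q\<in>{q. partition_on U q \<and> card q \<le> j \<and> (\<forall>C\<in>q. good C)}. (card S choose (j - card q)) * Pfall (card q) (card S - (j - card q)))"
    unfolding QS by (rule count_ext) (use dis g0 in \<open>auto simp: U_def S\<close>)
  also have "\<dots> = (\<Sum>m=0..j. \<Sum>q\<in>{q\<in>{q. partition_on U q \<and> card q \<le> j \<and> (\<forall>C\<in>q. good C)}. card q = m}. (card S choose (j - card q)) * Pfall (card q) (card S - (j - card q)))"
    by (rule sum.group[symmetric]) (use fQ in auto)
  also have "\<dots> = (\<Sum>m=0..j. card (Qset k a m) * ((a (Suc k) choose (j - m)) * Pfall m (a (Suc k) - (j - m))))"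
  proof (rule sum.cong[OF refl])
    fix m assume m: "m \<in> {0..j}"
    have e: "{q\<in>{q. partition_on U q \<and> card q \<le> j \<and> (\<forall>C\<in>q. good C)}. card q = m} = Qset k a m"
      unfolding Qset_def U_def good_def using m by auto
    show "(\<Sum>q\<in>{q\<in>{q. partition_on U q \<and> card q \<le> j \<and> (\<forall>C\<in>q. good C)}. card q = m}. (card S choose (j - card q)) * Pfall (card q) (card S - (j - card q)))
       = card (Qset k a m) * ((a (Suc k) choose (j - m)) * Pfall m (a (Suc k) - (j - m)))"
      unfolding e cS by (simp add: Qset_def)
  qed
  finally show ?thesis .
qed

lemma Q0: "card (Qset 0 a m) = (if m = 0 then 1 else 0)"
proof -
  have "Qset 0 a m = (if m = 0 then {{}} else {})"
    unfolding Qset_def segA_def by (auto simp: partition_on_empty)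
  then show ?thesis by simp
qed

lemma Q1: "card (Qset (Suc 0) a j) = (if j = a 1 then 1 else 0)"
proof -
  have "card (Qset (Suc 0) a j) = (\<Sum>m=0..j. (if m = 0 then 1 else 0) * ((a 1 choose (j - m)) * Pfall m (a 1 - (j - m))))"
    unfolding Qrec Q0 by simp
  also have "\<dots> = (\<Sum>m\<in>{0..j}. if m = 0 then (a 1 choose (j - m)) * Pfall m (a 1 - (j - m)) else 0)"
    by (rule sum.cong) auto
  also have "\<dots> = (a 1 choose j) * Pfall 0 (a 1 - j)"
    by (subst sum.delta) auto
  also have "\<dots> = (if j = a 1 then 1 else 0)"
    by (auto simp: Pfall_def)
  finally show ?thesis .
qed

definition Gf :: "(nat \<Rightarrow> nat) \<Rightarrow> nat \<Rightarrow> int \<Rightarrow> int" where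
  "Gf a k t = (\<Sum>l\<in>{l\<in>PiE {2..k} (\<lambda>c. {0..a c}). (\<Sum>c=2..k. int (l c)) = t - int (a 1)}.
       \<Prod>c=2..k. int ((a c choose l c) * Pfall (a 1 + (\<Sum>i=2..c-1. l i)) (a c - l c)))"

lemma G1: "Gf a 1 t = (if t = int (a 1) then 1 else 0)"
  unfolding Gf_def by auto

lemma Gneg: assumes "t < 0" shows "Gf a k t = 0"
proof -
  have "{l\<in>PiE {2..k} (\<lambda>c. {0..a c}). (\<Sum>c=2..k. int (l c)) = t - int (a 1)} = {}"
  proof safe
    fix l assume "(\<Sum>c=2..k. int (l c)) = t - int (a 1)"
    moreover have "(\<Sum>c=2..k. int (l c)) \<ge> 0" by (rule sum_nonneg) auto
    ultimately show "l \<in> {}" using assms by simp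
  qed
  note e = this
  show ?thesis unfolding Gf_def e by simp
qed

lemma Gstep:
  assumes "k \<ge> 1"
  shows "Gf a (Suc k) t = (\<Sum>x=0..a (Suc k). int ((a (Suc k) choose x) * Pfall (nat (t - int x)) (a (Suc k) - x)) * Gf a k (t - int x))"
proof -
  let ?n = "a (Suc k)"
  define L where "L = (\<lambda>k t. {l\<in>PiE {2..k} (\<lambda>c. {0..a c}). (\<Sum>c=2..k. int (l c)) = t - int (a 1)})"
  define h where "h = (\<lambda>k l. \<Prod>c=2..k. int ((a c choose l c) * Pfall (a 1 + (\<Sum>i=2..c-1. l i)) (a c - l c)))"
  have GL: "Gf a k t = sum (h k) (L k t)" for k t unfolding Gf_def L_def h_def by simp
  have iv: "{2..Suc k} = insert (Suc k) {2..k}" using assms by auto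
  have "Gf a (Suc k) t = (\<Sum>(x,g)\<in>Sigma {0..?n} (\<lambda>x. L k (t - int x)).
        int ((?n choose x) * Pfall (nat (t - int x)) (?n - x)) * h k g)"
    unfolding GL
  proof (rule sum.reindex_bij_witness[where i="\<lambda>(x,g). g(Suc k := x)" and j="\<lambda>l. (l (Suc k), l(Suc k := undefined))"])
    fix l assume l: "l \<in> L (Suc k) t"
    then show "(case (l (Suc k), l(Suc k := undefined)) of (x, g) \<Rightarrow> g(Suc k := x)) = l" by simp
    from l have lP: "l \<in> PiE {2..Suc k} (\<lambda>c. {0..a c})" and ls: "(\<Sum>c=2..Suc k. int (l c)) = t - int (a 1)"
      unfolding L_def by auto
    have s: "(\<Sum>c=2..Suc k. int (l c)) = int (l (Suc k)) + (\<Sum>c=2..k. int (l c))"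
      unfolding iv by simp
    have s2: "(\<Sum>c=2..k. int ((l(Suc k := undefined)) c)) = (\<Sum>c=2..k. int (l c))"
      by (rule sum.cong) auto
    show "(l (Suc k), l(Suc k := undefined)) \<in> Sigma {0..?n} (\<lambda>x. L k (t - int x))"
      using lP ls unfolding L_def s s2 iv by (auto simp: PiE_iff extensional_def)
    have p1: "h (Suc k) l = int ((?n choose l (Suc k)) * Pfall (a 1 + (\<Sum>i=2..k. l i)) (?n - l (Suc k))) * h k l"
      unfolding h_def iv by simp
    have p2: "h k (l(Suc k := undefined)) = h k l"
      unfolding h_def
      apply (rule prod.cong, simp)
      apply (subgoal_tac "(\<Sum>i = 2..x - 1. (l(Suc k := undefined)) i) = (\<Sum>i = 2..x - 1. l i)")
       apply simp
      by (rule sum.cong) auto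
    have "int (a 1 + (\<Sum>i=2..k. l i)) = t - int (l (Suc k))"
      using ls unfolding s by simp
    then have "a 1 + (\<Sum>i=2..k. l i) = nat (t - int (l (Suc k)))" by linarith
    then show "(case (l (Suc k), l(Suc k := undefined)) of (x, g) \<Rightarrow> int ((?n choose x) * Pfall (nat (t - int x)) (?n - x)) * h k g) = h (Suc k) l"
      using p1 p2 by simp
  next
    fix b assume b: "b \<in> Sigma {0..?n} (\<lambda>x. L k (t - int x))"
    obtain x g where bx: "b = (x,g)" by fastforce
    with b have x: "x \<in> {0..?n}" and g: "g \<in> PiE {2..k} (\<lambda>c. {0..a c})" and gs: "(\<Sum>c=2..k. int (g c)) = t - int x - int (a 1)"
      unfolding L_def by auto
    have gk: "g (Suc k) = undefined" using g by (auto simp: PiE_iff extensional_def)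
    then show "(case case b of (x, g) \<Rightarrow> g(Suc k := x) of l \<Rightarrow> (l (Suc k), l(Suc k := undefined))) = b"
      using bx by auto
    have s2: "(\<Sum>c=2..k. int ((g(Suc k := x)) c)) = (\<Sum>c=2..k. int (g c))"
      by (rule sum.cong) auto
    show "(case b of (x, g) \<Rightarrow> g(Suc k := x)) \<in> L (Suc k) t"
      using x g gs s2 unfolding bx L_def iv by (auto simp: PiE_iff extensional_def)
  qed
  also have "\<dots> = (\<Sum>x=0..?n. \<Sum>g\<in>L k (t - int x). int ((?n choose x) * Pfall (nat (t - int x)) (?n - x)) * h k g)"
    by (rule sum.Sigma[symmetric]) (auto simp: L_def intro: finite_subset[OF _ finite_PiE[of "{2..k}" "\<lambda>c. {0..a c}"]])
  also have "\<dots> = (\<Sum>x=0..?n. int ((?n choose x) * Pfall (nat (t - int x)) (?n - x)) * Gf a k (t - int x))"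
    unfolding GL by (simp add: sum_distrib_left)
  finally show ?thesis .
qed

lemma main_gen:
  assumes "k \<ge> 1"
  shows "Gf a k (int j) = int (card (Qset k a j))"
  using assms
proof (induction k arbitrary: j rule: nat_induct_at_least)
  case base
  then show ?case using G1[of a "int j"] Q1[of a j] by simp
next
  case (Suc k)
  let ?n = "a (Suc k)"
  define h where "h = (\<lambda>x. (?n choose x) * Pfall (j - x) (?n - x) * card (Qset k a (j - x)))"
  define H where "H = (\<lambda>x. if x \<le> j then h x else 0)"
  have "Gf a (Suc k) (int j) = (\<Sum>x=0..?n. int ((?n choose x) * Pfall (nat (int j - int x)) (?n - x)) * Gf a k (int j - int x))"
    by (rule Gstep[OF Suc.hyps])
  also have "\<dots> = (\<Sum>x=0..?n. int (H x))"
  proof (rule sum.cong[OF refl])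
    fix x assume x: "x \<in> {0..?n}"
    show "int ((?n choose x) * Pfall (nat (int j - int x)) (?n - x)) * Gf a k (int j - int x) = int (H x)"
    proof (cases "x \<le> j")
      case True
      then have "int j - int x = int (j - x)" by simp
      moreover have "nat (int j - int x) = j - x" using True by simp
      then show ?thesis using True Suc.IH[of "j - x"] unfolding H_def h_def by simp
    next
      case False
      then show ?thesis using Gneg[of "int j - int x" a k] unfolding H_def by simp
    qed
  qed
  also have "(\<Sum>x=0..?n. int (H x)) = (\<Sum>x=0..?n + j. int (H x))"
    by (rule sum.mono_neutral_left) (auto simp: H_def h_def)
  also have "\<dots> = (\<Sum>x=0..j. int (H x))"
    by (rule sum.mono_neutral_right) (auto simp: H_def h_def)
  also have "\<dots> = int (\<Sum>x=0..j. h x)"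
    by (simp add: H_def)
  also have "(\<Sum>x=0..j. h x) = card (Qset (Suc k) a j)"
  proof -
    have "card (Qset (Suc k) a j) = (\<Sum>m=0..j. card (Qset k a m) * ((?n choose (j - m)) * Pfall m (?n - (j - m))))"
      by (rule Qrec)
    also have "\<dots> = (\<Sum>x=0..j. card (Qset k a (j - x)) * ((?n choose (j - (j - x))) * Pfall (j - x) (?n - (j - (j - x)))))"
      by (subst sum.atLeastAtMost_rev) simp
    also have "\<dots> = (\<Sum>x=0..j. h x)"
      by (rule sum.cong) (auto simp: h_def)
    finally show ?thesis by simp
  qed
  finally show ?case .
qed

theorem mainTheorem3:
  fixes k j :: nat and a :: "nat \<Rightarrow> nat"
  assumes "k \<ge> 2" and "\<forall>i\<in>{1..k}. a i > 0" and "j \<ge> 1"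
  shows "int (card (Qset k a j)) =
    (\<Sum>l\<in>{l\<in>PiE {2..k} (\<lambda>c. {0..a c}). (\<Sum>c=2..k. int (l c)) = int j - int (a 1)}.
       \<Prod>c=2..k. int ((a c choose l c) * Pfall (a 1 + (\<Sum>i=2..c-1. l i)) (a c - l c)))"
  using main_gen[of k a j] assms(1) unfolding Gf_def by simp

end
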